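(* Let $c>0$ satisfy $\cosh^2(\tfrac12)+4c^2\sinh^2(\tfrac12)>e^2$. Define $$A^{(1)}=\begin{bmatrix}-1 & c\\ \tfrac{1}{4c} & -1\end{bmatrix},\qquad A^{(2)}=\begin{bmatrix}-1 & \tfrac{1}{4c}\\ c & -1\end{bmatrix},$$ and the $2$-periodic piecewise constant matrix function $A:\mathbb{R}\to\mathbb{R}^{2\times2}$ by $A(t)=A^{(1)}$ for $t\in[2k,2k+1)$ and $A(t)=A^{(2)}$ for $t\in[2k+1,2k+2)$, $k\in\mathbb{Z}$. Then for every $t\in\mathbb{R}$ the matrix $A(t)$ has positive off-diagonal entries and eigenvalues $-\tfrac12$ (its larger, principal eigenvalue) and $-\tfrac32$. Moreover, the matrix $P=e^{A^{(2)}}e^{A^{(1)}}$ has all entries positive and its larger eigenvalue $\mu$ satisfies $\mu>1$; if $w$ is an eigenvector of $P$ for $\mu$ with positive coordinates, then the solution $x(t)$ of $x'=A(t)x$ with $x(0)=w$ satisfies $x(2n)=\mu^n w$ for all $n=1,2,\dots$, so $\|x(2n)\|\to\infty$ as $n\to\infty$.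
   Context: A solution of $x'=A(t)x$ for this piecewise constant $A$ is a continuous function $\xi:\mathbb{R}\to\mathbb{R}^2$ such that $\xi'(t)=A^{(1)}\xi(t)$ for $t\in(2k,2k+1)$ and $\xi'(t)=A^{(2)}\xi(t)$ for $t\in(2k+1,2k+2)$, $k\in\mathbb{Z}$ (with the corresponding one-sided derivatives at integers); for each initial value at time $0$ there is a unique such solution. $\|\cdot\|$ denotes the Euclidean norm on $\mathbb{R}^2$. *)

theory Defs
  imports "HOL-Analysis.Analysis"
begin

primrec mat_pow :: "real^'n^'n \<Rightarrow> nat \<Rightarrow> real^'n^'n" where
  "mat_pow M 0 = mat 1"
| "mat_pow M (Suc k) = M ** mat_pow M k"

definition mat_exp :: "real^'n^'n \<Rightarrow> real^'n^'n" where
  "mat_exp M = (\<Sum>k. (1 / fact k) *\<^sub>R mat_pow M k)"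

definition eigenvalues :: "real^'n^'n \<Rightarrow> real set" where
  "eigenvalues M = {l. \<exists>v. v \<noteq> 0 \<and> M *v v = l *\<^sub>R v}"

definition A1 :: "real \<Rightarrow> real^2^2" where
  "A1 c = vector [vector [-1, c], vector [1 / (4*c), -1]]"

definition A2 :: "real \<Rightarrow> real^2^2" where
  "A2 c = vector [vector [-1, 1 / (4*c)], vector [c, -1]]"

definition Apw :: "real \<Rightarrow> real \<Rightarrow> real^2^2" where
  "Apw c t = (if even \<lfloor>t\<rfloor> then A1 c else A2 c)"

text \<open>Solution of x' = A(t) x: continuous, satisfying the ODE off the integers
  (where A is constant on a neighbourhood).\<close>
definition is_solution :: "(real \<Rightarrow> real^2^2) \<Rightarrow> (real \<Rightarrow> real^2) \<Rightarrow> bool" where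
  "is_solution A x \<longleftrightarrow> continuous_on UNIV x \<and>
     (\<forall>t. t \<notin> \<int> \<longrightarrow> (x has_vector_derivative (A t *v x t)) (at t))"

end

theory Submission imports Defs begin

definition Mpq :: "real \<Rightarrow> real \<Rightarrow> real^2^2" where
  "Mpq p q = vector [vector [-1, p], vector [q, -1]]"
definition Pp :: "real \<Rightarrow> real \<Rightarrow> real^2^2" where
  "Pp p q = vector [vector [1/2, p], vector [q, 1/2]]"
definition Pm :: "real \<Rightarrow> real \<Rightarrow> real^2^2" where
  "Pm p q = vector [vector [1/2, -p], vector [-q, 1/2]]"

lemma MPp: assumes "p * q = 1/4" shows "Mpq p q ** Pp p q = (-1/2) *\<^sub>R Pp p q"
  unfolding vec_eq_iff forall_2 Pp_def Mpq_def matrix_matrix_mult_def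
  using assms by (simp add: sum_2 algebra_simps)

lemma MPm: assumes "p * q = 1/4" shows "Mpq p q ** Pm p q = (-3/2) *\<^sub>R Pm p q"
  unfolding vec_eq_iff forall_2 Pm_def Mpq_def matrix_matrix_mult_def
  using assms by (simp add: sum_2 algebra_simps)

lemma PpPm: "Pp p q + Pm p q = mat 1"
  unfolding vec_eq_iff forall_2 Pm_def Pp_def mat_def by simp

lemma mat_pow_Mpq:
  assumes "p * q = 1/4"
  shows "mat_pow (Mpq p q) k = ((-1/2)^k) *\<^sub>R Pp p q + ((-3/2)^k) *\<^sub>R Pm p q"
proof (induction k)
  case 0
  show ?case using PpPm by simp
next
  case (Suc k)
  show ?case
  proof -
    have "mat_pow (Mpq p q) (Suc k) = (-1/2)^k *\<^sub>R (Mpq p q ** Pp p q) + (-3/2)^k *\<^sub>R (Mpq p q ** Pm p q)"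
      by (simp only: mat_pow.simps Suc matrix_add_ldistrib matrix_scalar_ac scalar_matrix_assoc)
    also have "\<dots> = ((-1/2)^Suc k) *\<^sub>R Pp p q + ((-3/2)^Suc k) *\<^sub>R Pm p q"
      by (simp only: MPp[OF assms] MPm[OF assms] scaleR_scaleR power_Suc mult.commute)
    finally show ?thesis .
  qed
qed

lemma mat_exp_Mpq:
  assumes "p * q = 1/4"
  shows "mat_exp (Mpq p q) = exp (-1/2) *\<^sub>R Pp p q + exp (-3/2) *\<^sub>R Pm p q"
proof -
  have "(\<lambda>k. ((-1/2::real)^k /\<^sub>R fact k) *\<^sub>R Pp p q + ((-3/2::real)^k /\<^sub>R fact k) *\<^sub>R Pm p q)
        sums (exp (-1/2) *\<^sub>R Pp p q + exp (-3/2) *\<^sub>R Pm p q)"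
    by (intro sums_add sums_scaleR_left exp_converges)
  moreover have "(\<lambda>k. ((-1/2::real)^k /\<^sub>R fact k) *\<^sub>R Pp p q + ((-3/2::real)^k /\<^sub>R fact k) *\<^sub>R Pm p q)
     = (\<lambda>k. (1 / fact k) *\<^sub>R mat_pow (Mpq p q) k)"
    by (simp add: mat_pow_Mpq[OF assms] scaleR_add_right field_split_simps)
  ultimately show ?thesis unfolding mat_exp_def by (simp add: sums_iff)
qed

lemma scalar_ode:
  fixes f :: "real \<Rightarrow> real"
  assumes "a < b" "continuous_on {a..b} f"
    and "\<And>t. a < t \<Longrightarrow> t < b \<Longrightarrow> (f has_real_derivative (lam * f t)) (at t)"
  shows "f b = exp (lam * (b - a)) * f a"
proof -
  let ?g = "\<lambda>t. exp (- lam * t) * f t"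
  have "?g b = ?g a"
  proof (rule DERIV_isconst_end[OF assms(1)])
    show "continuous_on {a..b} ?g"
      by (intro continuous_intros assms(2))
    fix t assume "a < t" "t < b"
    have "(?g has_real_derivative (- lam * exp (- lam * t) * f t + exp (- lam * t) * (lam * f t))) (at t)"
      by (auto intro!: derivative_eq_intros assms(3)[OF \<open>a<t\<close> \<open>t<b\<close>])
    then show "(?g has_real_derivative 0) (at t)" by (simp add: algebra_simps)
  qed
  then have "f b = exp (lam * b) * exp (- lam * a) * f a"
    by (simp add: exp_minus field_simps)
  then show ?thesis by (simp add: exp_diff[symmetric] right_diff_distrib exp_minus field_simps mult_exp_exp)
qed

lemma vec_ode:
  fixes x :: "real \<Rightarrow> real^2" and M :: "real^2^2" and l :: "real^2"
  assumes "a < b" "continuous_on {a..b} x"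
    and "\<And>t. a < t \<Longrightarrow> t < b \<Longrightarrow> (x has_vector_derivative (M *v x t)) (at t)"
    and "\<And>v. l \<bullet> (M *v v) = lam * (l \<bullet> v)"
  shows "l \<bullet> x b = exp (lam * (b - a)) * (l \<bullet> x a)"
proof (rule scalar_ode[OF assms(1), where f = "\<lambda>t. l \<bullet> x t"])
  show "continuous_on {a..b} (\<lambda>t. l \<bullet> x t)" by (intro continuous_intros assms(2))
  fix t assume "a < t" "t < b"
  have "((\<lambda>t. l \<bullet> x t) has_vector_derivative (l \<bullet> (M *v x t))) (at t)"
    by (rule bounded_linear.has_vector_derivative[OF bounded_linear_inner_right assms(3)[OF \<open>a<t\<close> \<open>t<b\<close>]])
  then show "((\<lambda>t. l \<bullet> x t) has_real_derivative lam * (l \<bullet> x t)) (at t)"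
    by (simp add: has_real_derivative_iff_has_vector_derivative assms(4))
qed


lemma mv2: "(M *v v) $ i = M $ i $ 1 * v $ 1 + M $ i $ 2 * (v :: real^2) $ 2"
  by (simp add: matrix_vector_mult_def sum_2)

lemma inner2: "(u :: real^2) \<bullet> v = u $ 1 * v $ 1 + u $ 2 * v $ 2"
  by (simp add: inner_vec_def sum_2)

lemma Mpq_entries: "Mpq p q $ 1 $ 1 = -1" "Mpq p q $ 1 $ 2 = p" "Mpq p q $ 2 $ 1 = q" "Mpq p q $ 2 $ 2 = -1"
  by (simp_all add: Mpq_def)

lemma E_entries:
  assumes "p * q = 1/4"
  shows "mat_exp (Mpq p q) $ 1 $ 1 = (exp (-1/2) + exp (-3/2)) / 2"
    "mat_exp (Mpq p q) $ 1 $ 2 = p * (exp (-1/2) - exp (-3/2))"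
    "mat_exp (Mpq p q) $ 2 $ 1 = q * (exp (-1/2) - exp (-3/2))"
    "mat_exp (Mpq p q) $ 2 $ 2 = (exp (-1/2) + exp (-3/2)) / 2"
  by (simp_all add: mat_exp_Mpq[OF assms] Pp_def Pm_def algebra_simps)

lemma left_eig1:
  assumes "p * q = 1/4"
  shows "vector [1, 2*p] \<bullet> (Mpq p q *v v) = (-1/2) * (vector [1, 2*p] \<bullet> v)"
proof -
  have "vector [1, 2*p] \<bullet> (Mpq p q *v v) = (- v$1 + p * v$2) + 2*p*(q * v$1 - v$2)"
    by (simp add: inner2 mv2 Mpq_entries)
  also have "\<dots> = (-1/2) * (v$1 + 2*p * v$2)" using assms by algebra
  finally show ?thesis by (simp add: inner2)
qed

lemma left_eig2:
  assumes "p * q = 1/4"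
  shows "vector [1, -2*p] \<bullet> (Mpq p q *v v) = (-3/2) * (vector [1, -2*p] \<bullet> v)"
proof -
  have "vector [1, -2*p] \<bullet> (Mpq p q *v v) = (- v$1 + p * v$2) - 2*p*(q * v$1 - v$2)"
    by (simp add: inner2 mv2 Mpq_entries)
  also have "\<dots> = (-3/2) * (v$1 - 2*p * v$2)" using assms by algebra
  finally show ?thesis by (simp add: inner2)
qed

lemma auxE1: "p*q = 1/4 \<Longrightarrow> ((E+F)/2 * a + p * (E-F) * b) + 2*p*(q * (E-F) * a + (E+F)/2 * b) = E * (a + 2*p * b)"
  for p q E F a b :: real
proof -
  assume h: "p*q = 1/4"
  have "((E+F)/2 * a + p * (E-F) * b) + 2*p*(q * (E-F) * a + (E+F)/2 * b) - E * (a + 2*p * b) = 2*a*(E-F)*(p*q - 1/4)"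
    by (simp add: field_simps)
  then show ?thesis using h by simp
qed
lemma auxE2: "p*q = 1/4 \<Longrightarrow> ((E+F)/2 * a + p * (E-F) * b) - 2*p*(q * (E-F) * a + (E+F)/2 * b) = F * (a - 2*p * b)"
  for p q E F a b :: real
proof -
  assume h: "p*q = 1/4"
  have "((E+F)/2 * a + p * (E-F) * b) - 2*p*(q * (E-F) * a + (E+F)/2 * b) - F * (a - 2*p * b) = -2*a*(E-F)*(p*q - 1/4)"
    by (simp add: field_simps)
  then show ?thesis using h by simp
qed

lemma left_eigE1:
  assumes "p * q = 1/4"
  shows "vector [1, 2*p] \<bullet> (mat_exp (Mpq p q) *v v) = exp (-1/2) * (vector [1, 2*p] \<bullet> v)"
proof -
  have "vector [1, 2*p] \<bullet> (mat_exp (Mpq p q) *v v) =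
     ((exp (-1/2) + exp (-3/2)) / 2 * v$1 + p * (exp (-1/2) - exp (-3/2)) * v$2)
     + 2*p*(q * (exp (-1/2) - exp (-3/2)) * v$1 + (exp (-1/2) + exp (-3/2)) / 2 * v$2)"
    by (simp add: inner2 mv2 E_entries[OF assms])
  also have "\<dots> = exp (-1/2) * (v$1 + 2*p * v$2)" by (rule auxE1[OF assms])
  finally show ?thesis by (simp add: inner2)
qed

lemma left_eigE2:
  assumes "p * q = 1/4"
  shows "vector [1, -2*p] \<bullet> (mat_exp (Mpq p q) *v v) = exp (-3/2) * (vector [1, -2*p] \<bullet> v)"
proof -
  have "vector [1, -2*p] \<bullet> (mat_exp (Mpq p q) *v v) =
     ((exp (-1/2) + exp (-3/2)) / 2 * v$1 + p * (exp (-1/2) - exp (-3/2)) * v$2)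
     - 2*p*(q * (exp (-1/2) - exp (-3/2)) * v$1 + (exp (-1/2) + exp (-3/2)) / 2 * v$2)"
    by (simp add: inner2 mv2 E_entries[OF assms])
  also have "\<dots> = exp (-3/2) * (v$1 - 2*p * v$2)" by (rule auxE2[OF assms])
  finally show ?thesis by (simp add: inner2)
qed

lemma step:
  assumes "p > 0" "p * q = 1/4" "continuous_on {a..a+1} x"
    and "\<And>t. a < t \<Longrightarrow> t < a+1 \<Longrightarrow> (x has_vector_derivative (Mpq p q *v x t)) (at t)"
  shows "x (a+1) = mat_exp (Mpq p q) *v x a"
proof -
  let ?u = "x (a+1) - mat_exp (Mpq p q) *v x a"
  have h1: "vector [1, 2*p] \<bullet> x (a+1) = exp (-1/2 * (a + 1 - a)) * (vector [1, 2*p] \<bullet> x a)"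
    by (rule vec_ode[OF _ assms(3) assms(4) left_eig1[OF assms(2)]]) auto
  have h2: "vector [1, -2*p] \<bullet> x (a+1) = exp (-3/2 * (a + 1 - a)) * (vector [1, -2*p] \<bullet> x a)"
    by (rule vec_ode[OF _ assms(3) assms(4) left_eig2[OF assms(2)]]) auto
  have e1: "vector [1, 2*p] \<bullet> ?u = 0"
    unfolding inner_diff_right left_eigE1[OF assms(2)] using h1 by simp
  have e2: "vector [1, -2*p] \<bullet> ?u = 0"
    unfolding inner_diff_right left_eigE2[OF assms(2)] using h2 by simp
  have "?u $ 1 + 2*p * ?u $ 2 = 0" "?u $ 1 - 2*p * ?u $ 2 = 0"
    using e1 e2 by (simp_all add: inner2)
  then have "?u $ 1 = 0" "?u $ 2 = 0" using assms(1) by auto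
  then have "?u = 0" by (simp add: vec_eq_iff forall_2)
  then show ?thesis by simp
qed

lemma eig_Mpq:
  assumes "p > 0" "p * q = 1/4"
  shows "eigenvalues (Mpq p q) = {-1/2, -3/2}"
proof
  show "eigenvalues (Mpq p q) \<subseteq> {-1/2, -3/2}"
  proof
    fix l assume "l \<in> eigenvalues (Mpq p q)"
    then obtain v where v: "v \<noteq> 0" "Mpq p q *v v = l *\<^sub>R v" unfolding eigenvalues_def by auto
    have c1: "- v$1 + p * v$2 = l * v$1" using arg_cong[OF v(2), of "\<lambda>u. u$1"] by (simp add: mv2 Mpq_entries)
    have c2: "q * v$1 - v$2 = l * v$2" using arg_cong[OF v(2), of "\<lambda>u. u$2"] by (simp add: mv2 Mpq_entries)
    have "v$1 \<noteq> 0 \<or> v$2 \<noteq> 0" using v(1) by (auto simp: vec_eq_iff forall_2)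
    have k1: "((l+1)^2 - 1/4) * v$1 = 0"
    proof -
      have "(l+1) * v$1 = p * v$2" using c1 by (simp add: algebra_simps)
      moreover have "(l+1) * v$2 = q * v$1" using c2 by (simp add: algebra_simps)
      ultimately show ?thesis using assms(2) by algebra
    qed
    have k2: "((l+1)^2 - 1/4) * v$2 = 0"
    proof -
      have "(l+1) * v$1 = p * v$2" using c1 by (simp add: algebra_simps)
      moreover have "(l+1) * v$2 = q * v$1" using c2 by (simp add: algebra_simps)
      ultimately show ?thesis using assms(2) by algebra
    qed
    have "(l+1)^2 - 1/4 = 0" using k1 k2 \<open>v$1 \<noteq> 0 \<or> v$2 \<noteq> 0\<close> by auto
    then have "(l + 1/2) * (l + 3/2) = 0" by algebra
    then show "l \<in> {-1/2, -3/2}" by auto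
  qed
next
  have "Mpq p q *v vector [2*p, 1] = (-1/2) *\<^sub>R vector [2*p, 1]"
    using assms by (simp add: vec_eq_iff forall_2 mv2 Mpq_entries algebra_simps)
  moreover have "vector [2*p, 1] \<noteq> (0::real^2)"
    by (metis vector_2(2) zero_index zero_neq_one)
  moreover have "Mpq p q *v vector [2*p, -1] = (-3/2) *\<^sub>R vector [2*p, -1]"
    using assms by (simp add: vec_eq_iff forall_2 mv2 Mpq_entries algebra_simps)
  moreover have "vector [2*p, -1] \<noteq> (0::real^2)"
    by (metis vector_2(2) zero_index neg_0_equal_iff_equal zero_neq_one)
  ultimately show "{-1/2, -3/2} \<subseteq> eigenvalues (Mpq p q)"
    unfolding eigenvalues_def by blast
qed


lemma mm2: "((A::real^2^2) ** B) $ i $ j = A $ i $ 1 * B $ 1 $ j + A $ i $ 2 * B $ 2 $ j"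
  by (simp add: matrix_matrix_mult_def sum_2)

lemma sym_eig:
  fixes M :: "real^2^2"
  assumes "M$1$2 = b" "M$2$1 = b" "b > 0"
  defines "mu \<equiv> (M$1$1 + M$2$2)/2 + sqrt (((M$1$1 - M$2$2)/2)^2 + b^2)"
  shows "mu \<in> eigenvalues M" "\<forall>l\<in>eigenvalues M. l \<le> mu" "mu \<ge> M$2$2"
proof -
  define a where "a = M$1$1"
  define d where "d = M$2$2"
  define r where "r = sqrt (((a - d)/2)^2 + b^2)"
  have r2: "r^2 = ((a - d)/2)^2 + b^2" unfolding r_def by simp
  have r0: "r \<ge> 0" unfolding r_def by simp
  have mu: "mu = (a+d)/2 + r" unfolding mu_def a_def d_def r_def by simp
  have rge: "r \<ge> \<bar>(a - d)/2\<bar>" unfolding r_def by (rule real_sqrt_ge_abs1)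
  show "mu \<ge> M$2$2" using rge unfolding mu d_def[symmetric] by argo
  define s where "s = (a - d)/2"
  have ma: "mu - a = r - s" unfolding mu s_def by argo
  have md: "mu - d = r + s" unfolding mu s_def by argo
  have key: "(mu - a) * (mu - d) = b^2"
  proof -
    have "(mu - a) * (mu - d) = r^2 - s^2" unfolding ma md by (simp add: algebra_simps power2_eq_square)
    then show ?thesis using r2 unfolding s_def by argo
  qed
  have "M *v vector [b, mu - a] = mu *\<^sub>R vector [b, mu - a]"
  proof -
    have "b * b + d * (mu - a) = mu * (mu - a)" using key by (simp add: algebra_simps power2_eq_square)
    then show ?thesis using assms(1,2)
      by (simp add: vec_eq_iff forall_2 mv2 a_def[symmetric] d_def[symmetric] algebra_simps)
  qed
  moreover have "vector [b, mu - a] \<noteq> (0::real^2)"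
    using assms(3) by (metis less_irrefl vector_2(1) zero_index)
  ultimately show "mu \<in> eigenvalues M" unfolding eigenvalues_def by blast
  show "\<forall>l\<in>eigenvalues M. l \<le> mu"
  proof
    fix l assume "l \<in> eigenvalues M"
    then obtain v where v: "v \<noteq> 0" "M *v v = l *\<^sub>R v" unfolding eigenvalues_def by auto
    have c1: "(l - a) * v$1 = b * v$2" using arg_cong[OF v(2), of "\<lambda>u. u$1"] assms(1)
      by (simp add: mv2 a_def algebra_simps)
    have c2: "(l - d) * v$2 = b * v$1" using arg_cong[OF v(2), of "\<lambda>u. u$2"] assms(2)
      by (simp add: mv2 d_def algebra_simps)
    have nz: "v$1 \<noteq> 0" "v$2 \<noteq> 0"
    proof -
      show "v$1 \<noteq> 0"
      proof
        assume "v$1 = 0" then have "v$2 = 0" using c1 assms(3) by simp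
        with \<open>v$1 = 0\<close> v(1) show False by (simp add: vec_eq_iff forall_2)
      qed
      show "v$2 \<noteq> 0"
      proof
        assume "v$2 = 0" then have "v$1 = 0" using c2 assms(3) by simp
        with \<open>v$2 = 0\<close> v(1) show False by (simp add: vec_eq_iff forall_2)
      qed
    qed
    have "(l - a) * (l - d) * (v$1 * v$2) = b^2 * (v$1 * v$2)"
    proof -
      have "(l - a) * (l - d) * (v$1 * v$2) = ((l - a) * v$1) * ((l - d) * v$2)" by (simp add: algebra_simps)
      also have "\<dots> = b^2 * (v$1 * v$2)" using c1 c2 by (simp add: power2_eq_square algebra_simps)
      finally show ?thesis .
    qed
    then have ll: "(l - a) * (l - d) = b^2" using nz by simp
    have "(l - (a+d)/2)^2 = r^2"
    proof -
      define t where "t = l - (a+d)/2"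
      have la: "l - a = t - s" unfolding t_def s_def by argo
      have ld: "l - d = t + s" unfolding t_def s_def by argo
      have "(l - a) * (l - d) = t^2 - s^2" unfolding la ld by (simp add: algebra_simps power2_eq_square)
      then show ?thesis using ll r2 unfolding t_def s_def by argo
    qed
    then have "l - (a+d)/2 = r \<or> l - (a+d)/2 = - r" by (simp only: power2_eq_iff)
    then show "l \<le> mu" unfolding mu using r0 by argo
  qed
qed


lemma notint:
  assumes "real_of_int k < t" "t < real_of_int k + 1"
  shows "t \<notin> \<int>"
proof
  assume "t \<in> \<int>"
  then obtain m where m: "t = real_of_int m" by (auto elim: Ints_cases)
  then have "k < m" "m < k + 1" using assms by linarith+
  then show False by linarith
qed

lemma sol_deriv:
  assumes sol: "is_solution (Apw c) x" and c0: "c > 0"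
  shows "\<And>t. 2 * real n < t \<Longrightarrow> t < 2 * real n + 1 \<Longrightarrow>
            (x has_vector_derivative (Mpq c (1/(4*c)) *v x t)) (at t)"
    and "\<And>t. 2 * real n + 1 < t \<Longrightarrow> t < 2 * real n + 1 + 1 \<Longrightarrow>
            (x has_vector_derivative (Mpq (1/(4*c)) c *v x t)) (at t)"
proof -
  have A1eq: "A1 c = Mpq c (1/(4*c))" by (simp add: A1_def Mpq_def)
  have A2eq: "A2 c = Mpq (1/(4*c)) c" by (simp add: A2_def Mpq_def)
  fix t assume t: "2 * real n < t" "t < 2 * real n + 1"
  have k: "real_of_int (2 * int n) < t" "t < real_of_int (2 * int n) + 1" using t by simp_all
  have "t \<notin> \<int>" by (rule notint[OF k])
  moreover have "\<lfloor>t\<rfloor> = 2 * int n" using k by (intro floor_unique) linarith+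
  ultimately show "(x has_vector_derivative (Mpq c (1/(4*c)) *v x t)) (at t)"
    using sol unfolding is_solution_def Apw_def A1eq by auto
next
  have A2eq: "A2 c = Mpq (1/(4*c)) c" by (simp add: A2_def Mpq_def)
  fix t assume t: "2 * real n + 1 < t" "t < 2 * real n + 1 + 1"
  have k: "real_of_int (2 * int n + 1) < t" "t < real_of_int (2 * int n + 1) + 1" using t by simp_all
  have "t \<notin> \<int>" by (rule notint[OF k])
  moreover have "\<lfloor>t\<rfloor> = 2 * int n + 1" using k by (intro floor_unique) linarith+
  ultimately show "(x has_vector_derivative (Mpq (1/(4*c)) c *v x t)) (at t)"
    using sol unfolding is_solution_def Apw_def A2eq by auto
qed


theorem mainTheorem1:
  fixes c :: real
  assumes "c > 0"
    and "(cosh (1/2))^2 + 4 * c^2 * (sinh (1/2))^2 > exp 2"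
  shows "(\<forall>t. Apw c t $ 1 $ 2 > 0 \<and> Apw c t $ 2 $ 1 > 0 \<and>
              eigenvalues (Apw c t) = {-1/2, -3/2})
    \<and> (let P = mat_exp (A2 c) ** mat_exp (A1 c) in
         (\<forall>i j. P $ i $ j > 0) \<and>
         (\<exists>\<mu>. \<mu> \<in> eigenvalues P \<and> (\<forall>l\<in>eigenvalues P. l \<le> \<mu>) \<and> \<mu> > 1 \<and>
            (\<forall>w x. (\<forall>i. w $ i > 0) \<and> P *v w = \<mu> *\<^sub>R w \<and>
                   is_solution (Apw c) x \<and> x 0 = w \<longrightarrow>
                   (\<forall>n::nat. n \<ge> 1 \<longrightarrow> x (2 * real n) = \<mu> ^ n *\<^sub>R w) \<and>
                   filterlim (\<lambda>n::nat. norm (x (2 * real n))) at_top sequentially)))"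
proof -
  have c0: "c > 0" by fact
  have pq1: "c * (1/(4*c)) = 1/4" using c0 by simp
  have pq2: "1/(4*c) * c = 1/4" using c0 by simp
  have q0: "1/(4*c) > 0" using c0 by simp
  have A1eq: "A1 c = Mpq c (1/(4*c))" by (simp add: A1_def Mpq_def)
  have A2eq: "A2 c = Mpq (1/(4*c)) c" by (simp add: A2_def Mpq_def)
  have part1: "\<forall>t. Apw c t $ 1 $ 2 > 0 \<and> Apw c t $ 2 $ 1 > 0 \<and> eigenvalues (Apw c t) = {-1/2, -3/2}"
  proof
    fix t
    show "Apw c t $ 1 $ 2 > 0 \<and> Apw c t $ 2 $ 1 > 0 \<and> eigenvalues (Apw c t) = {-1/2, -3/2}"
    proof (cases "even \<lfloor>t\<rfloor>")
      case True
      then show ?thesis using c0 q0 eig_Mpq[OF c0 pq1]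
        by (simp add: Apw_def A1eq Mpq_entries)
    next
      case False
      then show ?thesis using c0 q0 eig_Mpq[OF q0 pq2]
        by (simp add: Apw_def A2eq Mpq_entries)
    qed
  qed
  define E where "E = exp (-1/2::real)"
  define F where "F = exp (-3/2::real)"
  define al where "al = (E + F) / 2"
  define D where "D = E - F"
  have EF: "F < E" unfolding E_def F_def by simp
  have al0: "al > 0" unfolding al_def E_def F_def by (simp add: add_pos_pos)
  have D0: "D > 0" using EF unfolding D_def by simp
  define P where "P = mat_exp (A2 c) ** mat_exp (A1 c)"
  have E1: "mat_exp (A1 c) $ 1 $ 1 = al" "mat_exp (A1 c) $ 1 $ 2 = c * D"
     "mat_exp (A1 c) $ 2 $ 1 = 1/(4*c) * D" "mat_exp (A1 c) $ 2 $ 2 = al"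
    unfolding A1eq E_entries[OF pq1] al_def D_def E_def F_def by simp_all
  have E2: "mat_exp (A2 c) $ 1 $ 1 = al" "mat_exp (A2 c) $ 1 $ 2 = 1/(4*c) * D"
     "mat_exp (A2 c) $ 2 $ 1 = c * D" "mat_exp (A2 c) $ 2 $ 2 = al"
    unfolding A2eq E_entries[OF pq2] al_def D_def E_def F_def by simp_all
  have P11: "P $ 1 $ 1 = al * al + (1/(4*c) * D) * (1/(4*c) * D)"
    unfolding P_def mm2 E1 E2 by simp
  have P12: "P $ 1 $ 2 = al * (c * D) + (1/(4*c) * D) * al"
    unfolding P_def mm2 E1 E2 by simp
  have P21: "P $ 2 $ 1 = P $ 1 $ 2"
    unfolding P_def mm2 E1 E2 by (simp add: algebra_simps)
  have P22: "P $ 2 $ 2 = (c * D) * (c * D) + al * al"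
    unfolding P_def mm2 E1 E2 by simp
  have Ppos: "\<forall>i j. P $ i $ j > 0"
    unfolding forall_2 P21 using al0 D0 c0 q0 unfolding P11 P12 P22
    by (simp add: add_pos_pos mult_pos_pos)
  have b0: "P $ 1 $ 2 > 0" using Ppos by simp
  have d1: "P $ 2 $ 2 > 1"
  proof -
    have e1: "exp (-1/2::real) = exp (-1) * exp (1/2)" by (simp add: mult_exp_exp)
    have e2: "exp (-3/2::real) = exp (-1) * exp (-1/2)" by (simp add: mult_exp_exp)
    have alc: "al = exp (-1) * cosh (1/2)"
      unfolding al_def E_def F_def cosh_def using e1 e2 by (simp add: algebra_simps)
    have Dc: "D = 2 * exp (-1) * sinh (1/2)"
      unfolding D_def E_def F_def sinh_def using e1 e2 by (simp add: algebra_simps)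
    have "P $ 2 $ 2 = exp (-1) ^ 2 * ((cosh (1/2))^2 + 4 * c^2 * (sinh (1/2))^2)"
      unfolding P22 alc Dc by (simp add: power2_eq_square algebra_simps)
    also have "\<dots> > exp (-1) ^ 2 * exp 2"
      using assms(2) by (intro mult_strict_left_mono) simp_all
    also have "exp (-1) ^ 2 * exp 2 = (1::real)"
      by (simp add: power2_eq_square mult_exp_exp)
    finally show ?thesis .
  qed
  define mu where "mu = (P$1$1 + P$2$2)/2 + sqrt (((P$1$1 - P$2$2)/2)^2 + (P$1$2)^2)"
  have mu_eig: "mu \<in> eigenvalues P" "\<forall>l\<in>eigenvalues P. l \<le> mu" "mu \<ge> P$2$2"
    using sym_eig[OF refl P21 b0] unfolding mu_def by simp_all
  have mu1: "mu > 1" using mu_eig(3) d1 by linarith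
  have part3: "\<forall>w x. (\<forall>i. w $ i > 0) \<and> P *v w = mu *\<^sub>R w \<and>
                   is_solution (Apw c) x \<and> x 0 = w \<longrightarrow>
                   (\<forall>n::nat. n \<ge> 1 \<longrightarrow> x (2 * real n) = mu ^ n *\<^sub>R w) \<and>
                   filterlim (\<lambda>n::nat. norm (x (2 * real n))) at_top sequentially"
  proof (intro allI impI)
    fix w x
    assume h: "(\<forall>i. w $ i > 0) \<and> P *v w = mu *\<^sub>R w \<and> is_solution (Apw c) x \<and> x 0 = w"
    then have wpos: "\<forall>i. w $ i > 0" and Pw: "P *v w = mu *\<^sub>R w"
      and sol: "is_solution (Apw c) x" and x0: "x 0 = w" by auto
    have cont: "continuous_on UNIV x" using sol unfolding is_solution_def by simp
    have rec: "x (2 * real (Suc n)) = P *v x (2 * real n)" for n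
    proof -
      have s1: "x (2 * real n + 1) = mat_exp (Mpq c (1/(4*c))) *v x (2 * real n)"
        by (rule step[OF c0 pq1 continuous_on_subset[OF cont] sol_deriv(1)[OF sol c0]]) auto
      have s2: "x (2 * real n + 1 + 1) = mat_exp (Mpq (1/(4*c)) c) *v x (2 * real n + 1)"
        by (rule step[OF q0 pq2 continuous_on_subset[OF cont] sol_deriv(2)[OF sol c0]]) auto
      have "2 * real (Suc n) = 2 * real n + 1 + 1" by simp
      then have "x (2 * real (Suc n)) = x (2 * real n + 1 + 1)" by simp
      also have "\<dots> = P *v x (2 * real n)"
        unfolding s2 s1 P_def A1eq A2eq matrix_vector_mul_assoc ..
      finally show ?thesis .
    qed
    have xn: "x (2 * real n) = mu ^ n *\<^sub>R w" for n
    proof (induction n)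
      case 0 then show ?case using x0 by simp
    next
      case (Suc n)
      show ?case unfolding rec Suc matrix_vector_mult_scaleR Pw by simp
    qed
    have wnz: "norm w > 0"
    proof -
      have "w \<noteq> 0" using wpos by (metis less_irrefl zero_index)
      then show ?thesis by simp
    qed
    have "filterlim (\<lambda>n::nat. norm w * norm (mu ^ n)) at_top sequentially"
      by (rule filterlim_tendsto_pos_mult_at_top[OF tendsto_const wnz
            filterlim_at_infinity_imp_norm_at_top[OF filterlim_realpow_sequentially_gt1]])
         (use mu1 in simp)
    moreover have "(\<lambda>n. norm (x (2 * real n))) = (\<lambda>n::nat. norm w * norm (mu ^ n))"
      unfolding xn by (simp add: mult.commute)
    ultimately have "filterlim (\<lambda>n::nat. norm (x (2 * real n))) at_top sequentially" by simp
    then show "(\<forall>n::nat. n \<ge> 1 \<longrightarrow> x (2 * real n) = mu ^ n *\<^sub>R w) \<and>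
                   filterlim (\<lambda>n::nat. norm (x (2 * real n))) at_top sequentially"
      using xn by simp
  qed
  show ?thesis
    unfolding Let_def P_def[symmetric]
    using part1 Ppos mu_eig mu1 part3 by blast
qed

end
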